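(* For each $n$ let $\mathcal C_n\subset A_n$ be a conjugacy class of $S_n$ consisting of even permutations, with $\mathrm{supp}(\mathcal C_n)\ge 2$, and let $\overline u_n$ be the uniform measure on the alternating group $A_n$. Set $t_n=\frac n2\log n$. Then for every $\epsilon\in(0,1)$, $$\lim_{n\to\infty}d_2\big(h_{\mathcal C_n,(1-\epsilon)t_n},\overline u_n\big)=\infty.$$
   Context: For a conjugacy class $\mathcal C$ of $S_n$, $q_{\mathcal C}$ is the uniform probability measure on $\mathcal C$ and $\mathrm{supp}(\mathcal C)$ is the number of points not fixed by an element of $\mathcal C$. $h_{\mathcal C,t}=e^{-t}\sum_{k\ge0}\frac{t^k}{k!}q_{\mathcal C}^{(k)}$ (a probability measure on $A_n$ when $\mathcal C\subset A_n$), with $q^{(k)}$ the $k$-fold convolution power. For the group $G=A_n$, $d_2(p,\overline u)=\big(|A_n|\sum_{x\in A_n}|p(x)-\overline u(x)|^2\big)^{1/2}$. *)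

theory Defs
  imports "HOL-Analysis.Analysis" "HOL-Combinatorics.Permutations"
begin

text \<open>Permutations of [n] = {0..<n}, extended by the identity outside.\<close>

definition sym_grp :: "nat \<Rightarrow> (nat \<Rightarrow> nat) set" where
  "sym_grp n = {p. p permutes {..<n}}"

definition alt_grp :: "nat \<Rightarrow> (nat \<Rightarrow> nat) set" where
  "alt_grp n = {p. p permutes {..<n} \<and> evenperm p}"

definition conj_class :: "nat \<Rightarrow> (nat \<Rightarrow> nat) \<Rightarrow> (nat \<Rightarrow> nat) set" where
  "conj_class n c = {\<sigma> \<circ> c \<circ> inv \<sigma> | \<sigma>. \<sigma> permutes {..<n}}"

definition supp_size :: "(nat \<Rightarrow> nat) \<Rightarrow> nat" where
  "supp_size c = card {i. c i \<noteq> i}"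

definition unif :: "(nat \<Rightarrow> nat) set \<Rightarrow> (nat \<Rightarrow> nat) \<Rightarrow> real" where
  "unif A x = (if x \<in> A then 1 / real (card A) else 0)"

definition conv :: "(nat \<Rightarrow> nat) set \<Rightarrow> ((nat \<Rightarrow> nat) \<Rightarrow> real) \<Rightarrow> ((nat \<Rightarrow> nat) \<Rightarrow> real)
    \<Rightarrow> (nat \<Rightarrow> nat) \<Rightarrow> real" where
  "conv G p q x = (\<Sum>y\<in>G. p y * q (inv y \<circ> x))"

fun conv_pow :: "(nat \<Rightarrow> nat) set \<Rightarrow> ((nat \<Rightarrow> nat) \<Rightarrow> real) \<Rightarrow> nat \<Rightarrow> (nat \<Rightarrow> nat) \<Rightarrow> real" where
  "conv_pow G q 0 = (\<lambda>x. if x = id then 1 else 0)"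
| "conv_pow G q (Suc k) = conv G (conv_pow G q k) q"

definition heat :: "(nat \<Rightarrow> nat) set \<Rightarrow> ((nat \<Rightarrow> nat) \<Rightarrow> real) \<Rightarrow> real \<Rightarrow> (nat \<Rightarrow> nat) \<Rightarrow> real" where
  "heat G q t x = (\<Sum>k. exp (- t) * t ^ k / fact k * conv_pow G q k x)"

definition d2 :: "(nat \<Rightarrow> nat) set \<Rightarrow> ((nat \<Rightarrow> nat) \<Rightarrow> real) \<Rightarrow> ((nat \<Rightarrow> nat) \<Rightarrow> real) \<Rightarrow> real" where
  "d2 G p u = sqrt (real (card G) * (\<Sum>x\<in>G. \<bar>p x - u x\<bar>\<^sup>2))"

end

theory Submission
  imports Defs
begin

lemma conv_pow_nonneg:
  assumes "\<And>x. 0 \<le> q x"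
  shows "0 \<le> conv_pow G q k x"
proof (induction k arbitrary: x)
  case 0 then show ?case by simp
next
  case (Suc k) then show ?case
    by (simp add: conv_def assms sum_nonneg)
qed

lemma conv_pow_le:
  assumes "\<And>x. 0 \<le> q x" "\<And>x. q x \<le> 1"
  shows "conv_pow G q k x \<le> real (card G) ^ k"
proof (induction k arbitrary: x)
  case 0 then show ?case by simp
next
  case (Suc k)
  have "conv_pow G q (Suc k) x = (\<Sum>y\<in>G. conv_pow G q k y * q (inv y \<circ> x))"
    by (simp add: conv_def)
  also have "\<dots> \<le> (\<Sum>y\<in>G. real (card G) ^ k)"
  proof (rule sum_mono)
    fix y
    have "conv_pow G q k y * q (inv y \<circ> x) \<le> real (card G) ^ k * 1"
      by (rule mult_mono) (auto simp: Suc assms conv_pow_nonneg)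
    then show "conv_pow G q k y * q (inv y \<circ> x) \<le> real (card G) ^ k" by simp
  qed
  also have "\<dots> = real (card G) ^ Suc k" by simp
  finally show ?case .
qed

lemma heat_ge:
  assumes "\<And>x. 0 \<le> q x" "\<And>x. q x \<le> 1" "0 \<le> t"
  shows "exp (- t) \<le> heat G q t id"
proof -
  let ?f = "\<lambda>k. exp (- t) * t ^ k / fact k * conv_pow G q k id"
  have s: "summable (\<lambda>k. exp (-t) * ((t * real (card G)) ^ k /\<^sub>R fact k))"
    using exp_converges[of "t * real (card G)"] by (intro summable_mult) (auto simp: sums_iff)
  have "summable ?f"
  proof (rule summable_comparison_test[OF _ s])
    show "\<exists>N. \<forall>n\<ge>N. norm (?f n) \<le> exp (-t) * ((t * real (card G)) ^ n /\<^sub>R fact n)"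
    proof (intro exI allI impI)
      fix n :: nat
      have nn: "0 \<le> ?f n" using assms by (simp add: conv_pow_nonneg)
      have "?f n \<le> exp (- t) * t ^ n / fact n * real (card G) ^ n"
        by (rule mult_left_mono) (auto simp: conv_pow_le assms)
      then show "norm (?f n) \<le> exp (-t) * ((t * real (card G)) ^ n /\<^sub>R fact n)"
        using nn by (simp add: power_mult_distrib field_simps)
    qed
  qed
  then have "sum ?f {0} \<le> suminf ?f"
    by (rule sum_le_suminf) (auto simp: assms conv_pow_nonneg)
  then show ?thesis by (simp add: heat_def)
qed

lemma card_alt_grp:
  assumes "2 \<le> n"
  shows "fact n \<le> 2 * real (card (alt_grp n))"
proof -
  let ?S = "{p. p permutes {..<n}}"
  let ?O = "{p. p permutes {..<n} \<and> \<not> evenperm p}"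
  let ?tau = "Transposition.transpose (0::nat) 1"
  have fS: "finite ?S" by (rule finite_permutations) simp
  have tp: "?tau permutes {..<n}" using assms by (intro permutes_swap_id) auto
  have split: "?S = alt_grp n \<union> ?O" by (auto simp: alt_grp_def)
  have "card ?S \<le> card (alt_grp n) + card ?O"
    using split card_Un_le by metis
  moreover have "card ?O \<le> card (alt_grp n)"
  proof (rule card_inj_on_le)
    show "inj_on ((\<circ>) ?tau) ?O"
    proof (rule inj_onI)
      fix x y assume "?tau \<circ> x = ?tau \<circ> y"
      then have "?tau \<circ> (?tau \<circ> x) = ?tau \<circ> (?tau \<circ> y)" by simp
      then show "x = y" by (simp add: o_assoc)
    qed
    show "(\<circ>) ?tau ` ?O \<subseteq> alt_grp n"
    proof
      fix x assume "x \<in> (\<circ>) ?tau ` ?O"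
      then obtain p where p: "p permutes {..<n}" "\<not> evenperm p" and x: "x = ?tau \<circ> p" by auto
      have pp: "permutation p" using p(1) permutation_permutes by blast
      have "permutation ?tau" by (simp add: permutation_swap_id)
      moreover have "\<not> evenperm ?tau" using evenperm_swap[of "0::nat" 1] by simp
      ultimately have "evenperm x" using x p(2) pp evenperm_comp[of ?tau p] by simp
      moreover have "x permutes {..<n}" using x p(1) tp permutes_compose by blast
      ultimately show "x \<in> alt_grp n" by (simp add: alt_grp_def)
    qed
    show "finite (alt_grp n)" using fS by (rule rev_finite_subset) (auto simp: alt_grp_def)
  qed
  moreover have "card ?S = fact n" by (rule card_permutations) auto
  ultimately have "fact n \<le> 2 * card (alt_grp n)" by simp
  then show ?thesis by (metis of_nat_fact of_nat_le_iff of_nat_mult of_nat_numeral)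
qed

lemma fact_lower: "real n ^ n / exp (real n) \<le> fact n"
proof -
  have S: "(\<lambda>k. real n ^ k / fact k) sums exp (real n)"
    using exp_converges[of "real n"] by (simp add: divide_inverse mult.commute)
  have "sum (\<lambda>k. real n ^ k / fact k) {n} \<le> suminf (\<lambda>k. real n ^ k / fact k)"
    by (rule sum_le_suminf) (use S sums_summable in auto)
  also have "\<dots> = exp (real n)" using S sums_unique by metis
  finally have "real n ^ n / fact n \<le> exp (real n)" by simp
  then show ?thesis by (simp add: field_simps)
qed

lemma unif_bounds: "0 \<le> unif A x" "unif A x \<le> 1"
  by (auto simp: unif_def divide_le_eq)

lemma id_alt: "id \<in> alt_grp n"
  by (simp add: alt_grp_def permutes_id)

lemma finite_alt: "finite (alt_grp n)"
  by (rule rev_finite_subset[OF finite_permutations[of "{..<n}"]]) (auto simp: alt_grp_def)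

lemma d2_lower:
  assumes "0 \<le> t" "2 \<le> n" "\<And>x. 0 \<le> q x" "\<And>x. q x \<le> 1"
  shows "sqrt (fact n / 2) * exp (- t) - 1 \<le> d2 (alt_grp n) (heat (alt_grp n) q t) (unif (alt_grp n))"
proof -
  define G where "G = alt_grp n"
  define N where "N = real (card G)"
  define h where "h = heat G q t id"
  have fG: "finite G" by (simp add: G_def finite_alt)
  have idG: "id \<in> G" by (simp add: G_def id_alt)
  have Npos: "N \<ge> 1" using fG idG by (auto simp: N_def Suc_le_eq card_gt_0_iff)
  have Nf: "fact n / 2 \<le> N" using card_alt_grp[OF assms(2)] by (simp add: N_def G_def)
  have hge: "exp (- t) \<le> h" unfolding h_def by (rule heat_ge) (use assms in auto)
  have uid: "unif G id = 1 / N" using idG by (simp add: unif_def N_def)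
  have "\<bar>h - 1/N\<bar>\<^sup>2 \<le> (\<Sum>x\<in>G. \<bar>heat G q t x - unif G x\<bar>\<^sup>2)"
    using member_le_sum[of id G "\<lambda>x. \<bar>heat G q t x - unif G x\<bar>\<^sup>2"] fG idG
    by (simp add: h_def uid)
  then have a: "sqrt (N * \<bar>h - 1/N\<bar>\<^sup>2) \<le> d2 G (heat G q t) (unif G)"
    unfolding d2_def N_def[symmetric] using Npos by (intro real_sqrt_le_mono mult_left_mono) auto
  have b: "sqrt (N * \<bar>h - 1/N\<bar>\<^sup>2) = sqrt N * \<bar>h - 1/N\<bar>"
    by (simp add: real_sqrt_mult)
  have c: "sqrt N * \<bar>h - 1/N\<bar> \<ge> sqrt N * exp (-t) - sqrt N / N"
  proof -
    have "sqrt N * \<bar>h - 1/N\<bar> \<ge> sqrt N * (exp (-t) - 1/N)"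
      using hge Npos by (intro mult_left_mono) auto
    then show ?thesis by (simp add: right_diff_distrib)
  qed
  have d: "sqrt N / N \<le> 1"
  proof -
    have s1: "1 \<le> sqrt N" using Npos by simp
    have "sqrt N * 1 \<le> sqrt N * sqrt N" by (rule mult_left_mono) (use s1 in auto)
    then have "sqrt N \<le> sqrt N * sqrt N" by simp
    also have "\<dots> = N" using Npos by simp
    finally show ?thesis using Npos by simp
  qed
  have e: "sqrt (fact n / 2) * exp (-t) \<le> sqrt N * exp (-t)"
    using Nf by (intro mult_right_mono) auto
  show ?thesis using a b c d e unfolding G_def by linarith
qed

lemma sqrt_fact_lower:
  assumes "1 \<le> n"
  shows "exp ((real n * ln (real n) - real n - ln 2) / 2) \<le> sqrt (fact n / 2)"
proof -
  have np: "0 < real n" using assms by simp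
  have "exp (real n * ln (real n) - real n - ln 2) = real n ^ n / exp (real n) / 2"
    using np by (simp add: exp_diff exp_of_nat_mult)
  also have "\<dots> \<le> fact n / 2" using fact_lower[of n] by simp
  finally have le: "exp (real n * ln (real n) - real n - ln 2) \<le> fact n / 2" .
  have "exp ((real n * ln (real n) - real n - ln 2) / 2) = sqrt (exp (real n * ln (real n) - real n - ln 2))"
    by (simp add: real_sqrt_eq_iff exp_double[symmetric] flip: real_sqrt_unique)
  also have "\<dots> \<le> sqrt (fact n / 2)" using le by simp
  finally show ?thesis .
qed

lemma asymp_part:
  assumes "0 < e" "e < 1"
  shows "filterlim (\<lambda>n. exp ((real n * ln (real n) - real n - ln 2) / 2) * exp (- ((1 - e) * (real n / 2 * ln (real n)))) - 1) at_top sequentially"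
proof -
  have rn: "filterlim (\<lambda>n. real n) at_top sequentially" by (rule filterlim_real_sequentially)
  have l: "filterlim (\<lambda>n. ln (real n)) at_top sequentially"
    by (rule filterlim_compose[OF ln_at_top rn])
  have l2: "filterlim (\<lambda>n. e * ln (real n)) at_top sequentially"
    by (rule filterlim_tendsto_pos_mult_at_top[OF tendsto_const assms(1) l])
  have l3: "filterlim (\<lambda>n. (-1) + e * ln (real n)) at_top sequentially"
    by (rule filterlim_tendsto_add_at_top[OF tendsto_const l2])
  have r2: "filterlim (\<lambda>n. (1/2) * real n) at_top sequentially"
    by (rule filterlim_tendsto_pos_mult_at_top[OF tendsto_const _ rn]) simp
  have g1: "filterlim (\<lambda>n. (1/2) * real n * ((-1) + e * ln (real n))) at_top sequentially"
    by (rule filterlim_at_top_mult_at_top[OF r2 l3])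
  have g2: "filterlim (\<lambda>n. (- ln 2 / 2) + (1/2) * real n * ((-1) + e * ln (real n))) at_top sequentially"
    by (rule filterlim_tendsto_add_at_top[OF tendsto_const g1])
  have g3: "filterlim (\<lambda>n. exp ((- ln 2 / 2) + (1/2) * real n * ((-1) + e * ln (real n)))) at_top sequentially"
    by (rule filterlim_compose[OF exp_at_top g2])
  have g4: "filterlim (\<lambda>n. (-1) + exp ((- ln 2 / 2) + (1/2) * real n * ((-1) + e * ln (real n)))) at_top sequentially"
    by (rule filterlim_tendsto_add_at_top[OF tendsto_const g3])
  have eq: "exp ((real n * ln (real n) - real n - ln 2) / 2) * exp (- ((1 - e) * (real n / 2 * ln (real n)))) - 1
      = (-1) + exp ((- ln 2 / 2) + (1/2) * real n * ((-1) + e * ln (real n)))" for n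
  proof -
    have "exp ((real n * ln (real n) - real n - ln 2) / 2) * exp (- ((1 - e) * (real n / 2 * ln (real n))))
       = exp ((real n * ln (real n) - real n - ln 2) / 2 + (- ((1 - e) * (real n / 2 * ln (real n)))))"
      by (rule exp_add[symmetric])
    also have "(real n * ln (real n) - real n - ln 2) / 2 + (- ((1 - e) * (real n / 2 * ln (real n))))
       = (- ln 2 / 2) + (1/2) * real n * ((-1) + e * ln (real n))"
      by (simp add: field_simps)
    finally show ?thesis by simp
  qed
  show ?thesis unfolding eq by (rule g4)
qed

theorem theorem5p3:
  fixes C :: "nat \<Rightarrow> (nat \<Rightarrow> nat) set" and \<epsilon> :: real
  assumes "\<forall>\<^sub>F n in sequentially. \<exists>c. c permutes {..<n} \<and> C n = conj_class n c
              \<and> C n \<subseteq> alt_grp n \<and> supp_size c \<ge> 2"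
    and "0 < \<epsilon>" and "\<epsilon> < 1"
  shows "filterlim (\<lambda>n. d2 (alt_grp n)
            (heat (alt_grp n) (unif (C n)) ((1 - \<epsilon>) * (real n / 2 * ln (real n))))
            (unif (alt_grp n))) at_top sequentially"
proof (rule filterlim_at_top_mono[OF asymp_part[OF assms(2,3)]])
  show "\<forall>\<^sub>F n in sequentially. exp ((real n * ln (real n) - real n - ln 2) / 2) * exp (- ((1 - \<epsilon>) * (real n / 2 * ln (real n)))) - 1
     \<le> d2 (alt_grp n) (heat (alt_grp n) (unif (C n)) ((1 - \<epsilon>) * (real n / 2 * ln (real n)))) (unif (alt_grp n))"
  proof (rule eventually_sequentiallyI[of 2])
    fix n :: nat assume n: "2 \<le> n"
    let ?t = "(1 - \<epsilon>) * (real n / 2 * ln (real n))"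
    have q1: "\<And>x. 0 \<le> unif (C n) x" by (rule unif_bounds)
    have q2: "\<And>x. unif (C n) x \<le> 1" by (rule unif_bounds)
    have t0: "0 \<le> ?t" using n assms by (intro mult_nonneg_nonneg) auto
    have A: "exp ((real n * ln (real n) - real n - ln 2) / 2) * exp (- ?t) \<le> sqrt (fact n / 2) * exp (- ?t)"
      using sqrt_fact_lower[of n] n by (intro mult_right_mono) auto
    show "exp ((real n * ln (real n) - real n - ln 2) / 2) * exp (- ?t) - 1
       \<le> d2 (alt_grp n) (heat (alt_grp n) (unif (C n)) ?t) (unif (alt_grp n))"
      by (rule order_trans[OF diff_right_mono[OF A] d2_lower[of ?t n "unif (C n)", OF t0 n q1 q2]])
  qed
qed

end
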